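(* Let $v_1,\dots,v_m\in\mathbb{C}^d$ with $m$ even, $\sum_{i=1}^m v_iv_i^*=\mathbb{I}$, $\|v_i\|^2=\alpha$ for all $i$, and $\alpha\le\frac{1}{221d}$. Run Algorithm 1 (described in the context) and fix an iteration $0\le j<m/2$. Suppose that for every $0\le j'\le j$ we have $u_{j'}-\lambda_{\max}(A_{j'})\ge 1/3$ and $\kappa(u_{j'}\mathbb{I}-A_{j'})\le 3/2$. Write $A=A_j$, $\mathcal{B}=\mathcal{B}_j$, $\widehat u=u_{j+1}$. Then \[ \sum_{v\in\mathcal{B}}\log\Big(1-v^*(\widehat u\mathbb{I}-A)^{-1}v\Big)\ge\frac1\alpha\cdot\mathrm{tr}\Big[(\mathbb{I}-A)\cdot\log\big(\mathbb{I}-\alpha(\widehat u\mathbb{I}-A)^{-1}\big)\Big]. \]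
   Context: $\log$ of a positive definite matrix denotes the matrix logarithm. Algorithm 1: set $A_0=\mathbf{0}_{d\times d}$, $\mathcal{A}_0=\emptyset$, $\mathcal{B}_0=\{v_1,\dots,v_m\}$, $u_0=1/2$, $\delta_u=\alpha/d$. For $j=0,\dots,m/2-1$: set $u_{j+1}=u_j+\delta_u$; choose $v_j\in\mathcal{B}_j$ maximising $\det(u_{j+1}\mathbb{I}-A_j-vv^* )$ over $v\in\mathcal{B}_j$ (ties arbitrary); set $A_{j+1}=A_j+v_jv_j^*$, $\mathcal{A}_{j+1}=\mathcal{A}_j\cup\{v_j\}$, $\mathcal{B}_{j+1}=\mathcal{B}_j\setminus\{v_j\}$. $\kappa(B)=\lambda_{\max}(B)/\lambda_{\min}(B)$ for Hermitian positive definite $B$. *)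

theory Defs
  imports "Jordan_Normal_Form.Jordan_Normal_Form" "Jordan_Normal_Form.Spectral_Radius"
begin

definition gram_sum :: "nat \<Rightarrow> (nat \<Rightarrow> complex vec) \<Rightarrow> nat set \<Rightarrow> complex mat" where
  "gram_sum d v S = mat d d (\<lambda>(r, c). \<Sum>i\<in>S. v i $ r * cnj (v i $ c))"

definition outer :: "complex vec \<Rightarrow> complex mat" where
  "outer v = mat (dim_vec v) (dim_vec v) (\<lambda>(r, c). v $ r * cnj (v $ c))"

definition mtrace :: "complex mat \<Rightarrow> complex" where
  "mtrace A = (\<Sum>i<dim_row A. A $$ (i, i))"

definition unitary_mat :: "nat \<Rightarrow> complex mat \<Rightarrow> bool" where
  "unitary_mat n U \<longleftrightarrow> U \<in> carrier_mat n n \<and> mat_adjoint U * U = 1\<^sub>m n"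

definition lambda_max :: "complex mat \<Rightarrow> real" where
  "lambda_max A = Max {r. eigenvalue A (complex_of_real r)}"

definition lambda_min :: "complex mat \<Rightarrow> real" where
  "lambda_min A = Min {r. eigenvalue A (complex_of_real r)}"

definition cond_num :: "complex mat \<Rightarrow> real" where
  "cond_num B = lambda_max B / lambda_min B"

definition minv :: "complex mat \<Rightarrow> complex mat" where
  "minv M = the (mat_inverse M)"

definition mat_log :: "complex mat \<Rightarrow> complex mat" where
  "mat_log B = (THE L. \<exists>U (lam :: nat \<Rightarrow> real).
      unitary_mat (dim_row B) U \<and> (\<forall>i<dim_row B. lam i > 0) \<and>
      B = U * mat_diag (dim_row B) (\<lambda>i. complex_of_real (lam i)) * mat_adjoint U \<and>
      L = U * mat_diag (dim_row B) (\<lambda>i. complex_of_real (ln (lam i))) * mat_adjoint U)"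

(* Algorithm 1, with the vectors indexed by {0..<m} and sel j the index chosen at step j *)
definition u_seq :: "nat \<Rightarrow> real \<Rightarrow> nat \<Rightarrow> real" where
  "u_seq d \<alpha> j = 1/2 + real j * (\<alpha> / real d)"

definition A_seq :: "nat \<Rightarrow> (nat \<Rightarrow> complex vec) \<Rightarrow> (nat \<Rightarrow> nat) \<Rightarrow> nat \<Rightarrow> complex mat" where
  "A_seq d v sel j = gram_sum d v (sel ` {..<j})"

definition B_seq :: "nat \<Rightarrow> (nat \<Rightarrow> nat) \<Rightarrow> nat \<Rightarrow> nat set" where
  "B_seq m sel j = {..<m} - sel ` {..<j}"

(* sel is a valid run of Algorithm 1 (ties broken arbitrarily) *)
definition alg1_run :: "nat \<Rightarrow> nat \<Rightarrow> real \<Rightarrow> (nat \<Rightarrow> complex vec) \<Rightarrow> (nat \<Rightarrow> nat) \<Rightarrow> bool" where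
  "alg1_run d m \<alpha> v sel \<longleftrightarrow>
     (\<forall>j < m div 2. sel j \<in> B_seq m sel j \<and>
        (\<forall>w \<in> B_seq m sel j.
           Re (det (complex_of_real (u_seq d \<alpha> (Suc j)) \<cdot>\<^sub>m 1\<^sub>m d - A_seq d v sel j - outer (v w)))
           \<le> Re (det (complex_of_real (u_seq d \<alpha> (Suc j)) \<cdot>\<^sub>m 1\<^sub>m d - A_seq d v sel j - outer (v (sel j))))))"

end

theory Submission
  imports Defs
begin

lemma cinner_sum: "x \<in> carrier_vec n \<Longrightarrow> y \<in> carrier_vec n \<Longrightarrow> x \<bullet>c y = (\<Sum>i<n. x $ i * cnj (y $ i))"
  by (auto simp: scalar_prod_def lessThan_atLeast0)

lemma cinner_cnj: "x \<in> carrier_vec n \<Longrightarrow> y \<in> carrier_vec n \<Longrightarrow> cnj (x \<bullet>c y) = y \<bullet>c x"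
  by (simp add: cinner_sum mult.commute)

lemma adj_index[simp]: "i < dim_col U \<Longrightarrow> j < dim_row U \<Longrightarrow> mat_adjoint U $$ (i,j) = cnj (U $$ (j,i))"
  "dim_row (mat_adjoint U) = dim_col U" "dim_col (mat_adjoint U) = dim_row U"
  by (auto simp: mat_adjoint_def mat_of_rows_def)

lemma adj_carrier[simp]: "(U :: complex mat) \<in> carrier_mat n k \<Longrightarrow> mat_adjoint U \<in> carrier_mat k n"
  unfolding carrier_mat_def by simp

definition herm :: "nat \<Rightarrow> complex mat \<Rightarrow> bool" where
  "herm n A \<longleftrightarrow> A \<in> carrier_mat n n \<and> (\<forall>i<n. \<forall>j<n. A $$ (i,j) = cnj (A $$ (j,i)))"

lemma mult_mat_vec_sum: "A \<in> carrier_mat n k \<Longrightarrow> x \<in> carrier_vec k \<Longrightarrow> i < n \<Longrightarrow>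
  (A *\<^sub>v x) $ i = (\<Sum>j<k. A $$ (i,j) * x $ j)"
  by (auto simp: scalar_prod_def lessThan_atLeast0 row_def)

lemma herm_swap: assumes "herm n A" "x \<in> carrier_vec n" "y \<in> carrier_vec n"
  shows "(A *\<^sub>v x) \<bullet>c y = x \<bullet>c (A *\<^sub>v y)"
proof -
  have A: "A \<in> carrier_mat n n" and h: "\<And>i j. i<n \<Longrightarrow> j<n \<Longrightarrow> A $$ (i,j) = cnj (A $$ (j,i))"
    using assms(1) unfolding herm_def by blast+
  have Ax: "A *\<^sub>v x \<in> carrier_vec n" "A *\<^sub>v y \<in> carrier_vec n" using A assms by auto
  have "(A *\<^sub>v x) \<bullet>c y = (\<Sum>i<n. (A *\<^sub>v x) $ i * cnj (y $ i))"
    by (rule cinner_sum[OF Ax(1) assms(3)])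
  also have "\<dots> = (\<Sum>i<n. (\<Sum>j<n. A $$ (i,j) * x $ j) * cnj (y $ i))"
    by (intro sum.cong refl) (simp add: mult_mat_vec_sum[OF A assms(2)])
  also have "\<dots> = (\<Sum>i<n. \<Sum>j<n. x $ j * (A $$ (i,j) * cnj (y $ i)))"
    by (simp add: sum_distrib_left sum_distrib_right mult_ac)
  also have "\<dots> = (\<Sum>j<n. \<Sum>i<n. x $ j * (A $$ (i,j) * cnj (y $ i)))"
    by (rule sum.swap)
  also have "\<dots> = (\<Sum>j<n. x $ j * cnj (\<Sum>i<n. A $$ (j,i) * y $ i))"
  proof (intro sum.cong refl)
    fix j assume j: "j \<in> {..<n}"
    have "(\<Sum>i<n. x $ j * (A $$ (i,j) * cnj (y $ i))) = (\<Sum>i<n. x $ j * (cnj (A $$ (j,i)) * cnj (y $ i)))"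
    proof (intro sum.cong refl)
      fix i assume i: "i \<in> {..<n}"
      have "A $$ (i,j) = cnj (A $$ (j,i))" using h[of i j] i j by simp
      then show "x $ j * (A $$ (i,j) * cnj (y $ i)) = x $ j * (cnj (A $$ (j,i)) * cnj (y $ i))" by simp
    qed
    then show "(\<Sum>i<n. x $ j * (A $$ (i,j) * cnj (y $ i))) = x $ j * cnj (\<Sum>i<n. A $$ (j,i) * y $ i)"
      by (simp add: sum_distrib_left cnj_sum)
  qed
  also have "\<dots> = (\<Sum>j<n. x $ j * cnj ((A *\<^sub>v y) $ j))"
    by (intro sum.cong refl) (simp add: mult_mat_vec_sum[OF A assms(3)])
  also have "\<dots> = x \<bullet>c (A *\<^sub>v y)"
    by (rule cinner_sum[OF assms(2) Ax(2), symmetric])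
  finally show ?thesis .
qed

lemma sum3_swap: "(\<Sum>r\<in>R. \<Sum>l\<in>L. \<Sum>k\<in>K. f r l k) = (\<Sum>k\<in>K. \<Sum>l\<in>L. \<Sum>r\<in>R. f r l k)"
proof -
  have "(\<Sum>r\<in>R. \<Sum>l\<in>L. \<Sum>k\<in>K. f r l k) = (\<Sum>r\<in>R. \<Sum>k\<in>K. \<Sum>l\<in>L. f r l k)"
    by (rule sum.cong[OF refl], rule sum.swap)
  also have "\<dots> = (\<Sum>k\<in>K. \<Sum>r\<in>R. \<Sum>l\<in>L. f r l k)" by (rule sum.swap)
  also have "\<dots> = (\<Sum>k\<in>K. \<Sum>l\<in>L. \<Sum>r\<in>R. f r l k)"
    by (rule sum.cong[OF refl], rule sum.swap)
  finally show ?thesis .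
qed

definition orthonormal :: "nat \<Rightarrow> complex vec list \<Rightarrow> bool" where
  "orthonormal n ws \<longleftrightarrow> set ws \<subseteq> carrier_vec n \<and>
     (\<forall>i<length ws. \<forall>j<length ws. ws ! i \<bullet>c ws ! j = (if i = j then 1 else 0))"

definition lc :: "nat \<Rightarrow> complex vec list \<Rightarrow> (nat \<Rightarrow> complex) \<Rightarrow> complex vec" where
  "lc n ws c = vec n (\<lambda>r. \<Sum>k<length ws. c k * ws ! k $ r)"

lemma lc_carrier[simp]: "lc n ws c \<in> carrier_vec n" by (simp add: lc_def)
lemma lc_dim[simp]: "dim_vec (lc n ws c) = n" by (simp add: lc_def)
lemma lc_index: "r < n \<Longrightarrow> lc n ws c $ r = (\<Sum>k<length ws. c k * ws ! k $ r)" by (simp add: lc_def)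

lemma sum3_swap2: "(\<Sum>r\<in>R. \<Sum>k\<in>K. \<Sum>l\<in>L. f r k l) = (\<Sum>k\<in>K. \<Sum>l\<in>L. \<Sum>r\<in>R. f r k l)"
proof -
  have "(\<Sum>r\<in>R. \<Sum>k\<in>K. \<Sum>l\<in>L. f r k l) = (\<Sum>k\<in>K. \<Sum>r\<in>R. \<Sum>l\<in>L. f r k l)" by (rule sum.swap)
  also have "\<dots> = (\<Sum>k\<in>K. \<Sum>l\<in>L. \<Sum>r\<in>R. f r k l)"
    by (rule sum.cong[OF refl], rule sum.swap)
  finally show ?thesis .
qed

lemma lc_inner: assumes "orthonormal n ws"
  shows "lc n ws c \<bullet>c lc n ws c' = (\<Sum>k<length ws. c k * cnj (c' k))"
proof -
  let ?K = "length ws"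
  have ws: "\<And>k. k < ?K \<Longrightarrow> ws ! k \<in> carrier_vec n" and o: "\<And>i j. i < ?K \<Longrightarrow> j < ?K \<Longrightarrow> ws ! i \<bullet>c ws ! j = (if i = j then 1 else 0)"
    using assms unfolding orthonormal_def by auto
  have "lc n ws c \<bullet>c lc n ws c' = (\<Sum>r<n. lc n ws c $ r * cnj (lc n ws c' $ r))"
    by (rule cinner_sum) auto
  also have "\<dots> = (\<Sum>r<n. (\<Sum>k<?K. c k * ws ! k $ r) * (\<Sum>l<?K. cnj (c' l) * cnj (ws ! l $ r)))"
    by (intro sum.cong refl) (simp add: lc_index cnj_sum)
  also have "\<dots> = (\<Sum>r<n. \<Sum>k<?K. \<Sum>l<?K. (c k * ws ! k $ r) * (cnj (c' l) * cnj (ws ! l $ r)))"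
    by (simp only: sum_product)
  also have "\<dots> = (\<Sum>k<?K. \<Sum>l<?K. \<Sum>r<n. (c k * ws ! k $ r) * (cnj (c' l) * cnj (ws ! l $ r)))"
    by (rule sum3_swap2)
  also have "\<dots> = (\<Sum>k<?K. \<Sum>l<?K. c k * cnj (c' l) * (\<Sum>r<n. ws ! k $ r * cnj (ws ! l $ r)))"
    by (intro sum.cong refl) (simp add: sum_distrib_left mult_ac)
  also have "\<dots> = (\<Sum>k<?K. \<Sum>l<?K. (if k = l then c k * cnj (c' l) else 0))"
  proof (intro sum.cong refl)
    fix k l assume "k \<in> {..<?K}" "l \<in> {..<?K}"
    then show "c k * cnj (c' l) * (\<Sum>r<n. ws ! k $ r * cnj (ws ! l $ r)) = (if k = l then c k * cnj (c' l) else 0)"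
      using o[of k l] cinner_sum[OF ws ws, of k l] by simp
  qed
  also have "\<dots> = (\<Sum>k<?K. c k * cnj (c' k))"
    by simp
  finally show ?thesis .
qed

lemma lc_inner_basis: assumes "orthonormal n ws" "j < length ws"
  shows "lc n ws c \<bullet>c ws ! j = c j"
proof -
  let ?K = "length ws"
  have ws: "\<And>k. k < ?K \<Longrightarrow> ws ! k \<in> carrier_vec n" and o: "\<And>i j. i < ?K \<Longrightarrow> j < ?K \<Longrightarrow> ws ! i \<bullet>c ws ! j = (if i = j then 1 else 0)"
    using assms unfolding orthonormal_def by auto
  have "lc n ws c \<bullet>c ws ! j = (\<Sum>r<n. (\<Sum>k<?K. c k * ws ! k $ r) * cnj (ws ! j $ r))"
    using ws[OF assms(2)] by (simp add: cinner_sum lc_def)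
  also have "\<dots> = (\<Sum>r<n. \<Sum>k<?K. c k * (ws ! k $ r * cnj (ws ! j $ r)))"
    by (simp add: sum_distrib_left sum_distrib_right mult_ac)
  also have "\<dots> = (\<Sum>k<?K. \<Sum>r<n. c k * (ws ! k $ r * cnj (ws ! j $ r)))"
    by (rule sum.swap)
  also have "\<dots> = (\<Sum>k<?K. c k * (\<Sum>r<n. ws ! k $ r * cnj (ws ! j $ r)))"
    by (simp add: sum_distrib_left)
  also have "\<dots> = (\<Sum>k<?K. (if k = j then c k else 0))"
  proof (intro sum.cong refl)
    fix k assume "k \<in> {..<?K}"
    then show "c k * (\<Sum>r<n. ws ! k $ r * cnj (ws ! j $ r)) = (if k = j then c k else 0)"
      using o[of k j] cinner_sum[OF ws ws, of k j] assms(2) by simp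
  qed
  also have "\<dots> = c j" using assms(2) by simp
  finally show ?thesis .
qed

lemma orthonormal_unitary: assumes "orthonormal n ws" "length ws = n"
  shows "unitary_mat n (mat_of_cols n ws)" "mat_of_cols n ws * mat_adjoint (mat_of_cols n ws) = 1\<^sub>m n"
proof -
  let ?U = "mat_of_cols n ws"
  have ws: "\<And>k. k < n \<Longrightarrow> ws ! k \<in> carrier_vec n" and o: "\<And>i j. i < n \<Longrightarrow> j < n \<Longrightarrow> ws ! i \<bullet>c ws ! j = (if i = j then 1 else 0)"
    using assms unfolding orthonormal_def by auto
  have U: "?U \<in> carrier_mat n n" using assms by auto
  have 1: "mat_adjoint ?U * ?U = 1\<^sub>m n"
  proof (rule eq_matI)
    fix i j assume i: "i < dim_row (1\<^sub>m n)" and j: "j < dim_col (1\<^sub>m n)"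
    have "(mat_adjoint ?U * ?U) $$ (i,j) = (\<Sum>r<n. cnj (ws ! i $ r) * ws ! j $ r)"
      using i j U assms by (simp add: scalar_prod_def lessThan_atLeast0 row_def col_def mat_of_cols_index)
    also have "\<dots> = ws ! j \<bullet>c ws ! i" using ws i j cinner_sum[OF ws ws, of j i] by (simp add: mult.commute)
    also have "\<dots> = 1\<^sub>m n $$ (i,j)" using o i j by auto
    finally show "(mat_adjoint ?U * ?U) $$ (i,j) = 1\<^sub>m n $$ (i,j)" .
  qed (use U in auto)
  then show "unitary_mat n ?U" using U unfolding unitary_mat_def by auto
  show "?U * mat_adjoint ?U = 1\<^sub>m n"
    by (rule mat_mult_left_right_inverse[OF _ U 1]) (use U in auto)
qed

lemma completeness: assumes "orthonormal n ws" "length ws = n" "x \<in> carrier_vec n"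
  shows "x = lc n ws (\<lambda>k. x \<bullet>c ws ! k)"
proof -
  let ?U = "mat_of_cols n ws"
  have ws: "\<And>k. k < n \<Longrightarrow> ws ! k \<in> carrier_vec n"
    using assms unfolding orthonormal_def by auto
  have U: "?U \<in> carrier_mat n n" using assms by auto
  have "x = (?U * mat_adjoint ?U) *\<^sub>v x" using orthonormal_unitary[OF assms(1,2)] assms(3) by simp
  also have "\<dots> = ?U *\<^sub>v (mat_adjoint ?U *\<^sub>v x)" using U assms(3) by (simp add: assoc_mult_mat_vec[of _ n n _ n])
  also have "\<dots> = lc n ws (\<lambda>k. x \<bullet>c ws ! k)"
  proof (rule eq_vecI)
    fix r assume r: "r < dim_vec (lc n ws (\<lambda>k. x \<bullet>c ws ! k))"
    hence r: "r < n" by simp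
    have "(?U *\<^sub>v (mat_adjoint ?U *\<^sub>v x)) $ r = (\<Sum>k<n. ws ! k $ r * (\<Sum>c<n. cnj (ws ! k $ c) * x $ c))"
      using r U assms by (simp add: scalar_prod_def lessThan_atLeast0 row_def col_def mat_of_cols_index)
    also have "\<dots> = lc n ws (\<lambda>k. x \<bullet>c ws ! k) $ r"
      using r assms ws by (simp add: lc_def cinner_sum mult_ac)
    finally show "(?U *\<^sub>v (mat_adjoint ?U *\<^sub>v x)) $ r = lc n ws (\<lambda>k. x \<bullet>c ws ! k) $ r" .
  qed (use assms in auto)
  finally show ?thesis .
qed

lemma cinner_smult: "x \<in> carrier_vec n \<Longrightarrow> y \<in> carrier_vec n \<Longrightarrow>
   (a \<cdot>\<^sub>v x) \<bullet>c (b \<cdot>\<^sub>v y) = a * cnj b * (x \<bullet>c y)"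
proof -
  assume x: "x \<in> carrier_vec n" and y: "y \<in> carrier_vec n"
  have "(a \<cdot>\<^sub>v x) \<bullet>c (b \<cdot>\<^sub>v y) = (\<Sum>i<n. (a \<cdot>\<^sub>v x) $ i * cnj ((b \<cdot>\<^sub>v y) $ i))"
    by (rule cinner_sum) (use x y in auto)
  also have "\<dots> = (\<Sum>i<n. a * cnj b * (x $ i * cnj (y $ i)))"
    by (intro sum.cong refl) (use x y in auto)
  also have "\<dots> = a * cnj b * (x \<bullet>c y)"
    by (simp add: cinner_sum[OF x y] sum_distrib_left)
  finally show ?thesis .
qed

lemma cinner_self_real: assumes "x \<in> carrier_vec n" "x \<noteq> 0\<^sub>v n"
  shows "x \<bullet>c x = complex_of_real (Re (x \<bullet>c x))" "Re (x \<bullet>c x) > 0"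
proof -
  have "x \<bullet>c x > 0" using assms by simp
  then show "x \<bullet>c x = complex_of_real (Re (x \<bullet>c x))" "Re (x \<bullet>c x) > 0"
    by (auto simp: less_complex_def complex_eq_iff)
qed

lemma unit_complete: assumes v: "v \<in> carrier_vec n" and v1: "v \<bullet>c v = 1"
  shows "\<exists>ws. orthonormal n ws \<and> length ws = n \<and> ws ! 0 = v"
proof -
  have v0: "v \<noteq> 0\<^sub>v n" using v1 by auto
  interpret cof_vec_space n "TYPE(complex)" .
  define b where "b = basis_completion v"
  from basis_completion[OF v v0, folded b_def]
  have dist_b: "distinct b" and indep: "\<not> lin_dep (set b)" and bc: "set b \<subseteq> carrier_vec n"
    and hdb: "hd b = v" and len_b: "length b = n" by auto
  have n: "n > 0"
  proof (rule ccontr)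
    assume "\<not> n > 0" then have "n = 0" by simp
    then have "v \<bullet>c v = 0" using v by (simp add: scalar_prod_def)
    then show False using v1 by simp
  qed
  from hdb len_b n obtain vs where bv: "b = v # vs" by (cases b, auto)
  define gs where "gs = gram_schmidt n b"
  from gram_schmidt_result[OF bc dist_b indep gs_def]
  have gc: "set gs \<subseteq> carrier_vec n" and corth: "corthogonal gs" and len_g: "length gs = n" by (auto simp: len_b)
  have hdg: "hd gs = v" unfolding gs_def bv by (rule gram_schmidt_hd[OF v])
  define nrm where "nrm = (\<lambda>w::complex vec. complex_of_real (1 / sqrt (Re (w \<bullet>c w))))"
  define ws where "ws = map (\<lambda>w. nrm w \<cdot>\<^sub>v w) gs"
  have g: "\<And>i. i < n \<Longrightarrow> gs ! i \<in> carrier_vec n" using gc len_g by auto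
  have gnz: "\<And>i. i < n \<Longrightarrow> gs ! i \<noteq> 0\<^sub>v n"
  proof
    fix i assume i: "i < n" and z: "gs ! i = 0\<^sub>v n"
    have "gs ! i \<bullet>c gs ! i \<noteq> 0" using corthogonalD[OF corth, of i i] i len_g by auto
    then show False using z by simp
  qed
  have orth: "orthonormal n ws"
    unfolding orthonormal_def
  proof (intro conjI allI impI)
    show "set ws \<subseteq> carrier_vec n" unfolding ws_def using gc by auto
    fix i j assume i: "i < length ws" and j: "j < length ws"
    then have i': "i < n" and j': "j < n" by (auto simp: ws_def len_g)
    have "ws ! i \<bullet>c ws ! j = nrm (gs ! i) * cnj (nrm (gs ! j)) * (gs ! i \<bullet>c gs ! j)"
      unfolding ws_def using i' j' len_g by (simp add: cinner_smult[OF g g])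
    also have "\<dots> = (if i = j then 1 else 0)"
    proof (cases "i = j")
      case True
      define r where "r = Re (gs ! i \<bullet>c gs ! i)"
      have r: "gs ! i \<bullet>c gs ! i = complex_of_real r" "r > 0"
        using cinner_self_real[OF g[OF i'] gnz[OF i']] unfolding r_def by auto
      have "nrm (gs ! i) * cnj (nrm (gs ! i)) * (gs ! i \<bullet>c gs ! i) = complex_of_real ((1 / sqrt r) * (1 / sqrt r) * r)"
        unfolding nrm_def r_def[symmetric] r(1) by (simp only: complex_cnj_complex_of_real of_real_mult Re_complex_of_real)
      also have "(1 / sqrt r) * (1 / sqrt r) * r = 1"
      proof -
        have s: "sqrt r * sqrt r = r" using r(2) by simp
        have "sqrt r > 0" using r(2) by simp
        then show ?thesis using s by (simp add: field_simps)
      qed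
      finally show ?thesis using True by simp
    next
      case False
      then show ?thesis using corthogonalD[OF corth, of i j] i' j' len_g by auto
    qed
    finally show "ws ! i \<bullet>c ws ! j = (if i = j then 1 else 0)" .
  qed
  have "ws ! 0 = v"
  proof -
    have "gs ! 0 = v" using hdg n len_g by (cases gs) auto
    then have "ws ! 0 = nrm v \<cdot>\<^sub>v v" unfolding ws_def using n len_g by simp
    also have "nrm v = 1" unfolding nrm_def v1 by simp
    finally show ?thesis by simp
  qed
  moreover have "length ws = n" unfolding ws_def using len_g by simp
  ultimately show ?thesis using orth by blast
qed

lemma cinner_smult_left: "(x :: complex vec) \<in> carrier_vec n \<Longrightarrow> y \<in> carrier_vec n \<Longrightarrow> (a \<cdot>\<^sub>v x) \<bullet>c y = a * (x \<bullet>c y)"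
  using cinner_smult[of x n y a 1] by simp

lemma cinner_smult_right: "x \<in> carrier_vec n \<Longrightarrow> y \<in> carrier_vec n \<Longrightarrow> x \<bullet>c (b \<cdot>\<^sub>v y) = cnj b * (x \<bullet>c y)"
  using cinner_smult[of x n y 1 b] by simp

lemma normalize_unit: assumes x: "x \<in> carrier_vec n" and x0: "x \<noteq> 0\<^sub>v n"
  shows "(complex_of_real (1 / sqrt (Re (x \<bullet>c x))) \<cdot>\<^sub>v x) \<bullet>c (complex_of_real (1 / sqrt (Re (x \<bullet>c x))) \<cdot>\<^sub>v x) = 1"
proof -
  define r where "r = Re (x \<bullet>c x)"
  have r: "x \<bullet>c x = complex_of_real r" "r > 0"
    using cinner_self_real[OF x x0] unfolding r_def by auto
  have "(complex_of_real (1 / sqrt r) \<cdot>\<^sub>v x) \<bullet>c (complex_of_real (1 / sqrt r) \<cdot>\<^sub>v x) = complex_of_real ((1 / sqrt r) * (1 / sqrt r) * r)"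
    unfolding cinner_smult[OF x x] r(1) by (simp only: complex_cnj_complex_of_real of_real_mult)
  also have "(1 / sqrt r) * (1 / sqrt r) * r = 1"
  proof -
    have s: "sqrt r * sqrt r = r" using r(2) by simp
    have "sqrt r > 0" using r(2) by simp
    then show ?thesis using s by (simp add: field_simps)
  qed
  finally show ?thesis unfolding r_def by simp
qed

lemma lc_cong: "(\<And>k. k < length ws \<Longrightarrow> c k = c' k) \<Longrightarrow> lc n ws c = lc n ws c'"
  unfolding lc_def by (intro eq_vecI) auto

lemma lc_smult: "lc n ws (\<lambda>k. a * c k) = a \<cdot>\<^sub>v lc n ws c"
  unfolding lc_def by (intro eq_vecI) (auto simp: sum_distrib_left mult_ac)

lemma spectral: "herm n A \<Longrightarrow> \<exists>ws lam. orthonormal n ws \<and> length ws = n \<and>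
   (\<forall>k<n. A *\<^sub>v ws ! k = complex_of_real (lam k) \<cdot>\<^sub>v ws ! k)"
proof (induction n arbitrary: A)
  case 0
  show ?case by (rule exI[of _ "[]"]) (simp add: orthonormal_def)
next
  case (Suc n A)
  have A: "A \<in> carrier_mat (Suc n) (Suc n)" using Suc.prems unfolding herm_def by blast
  from spectrum_non_empty[OF A] obtain e where "eigenvalue A e" unfolding spectrum_def by auto
  then obtain v0 where "eigenvector A v0 e" unfolding eigenvalue_def by auto
  then have v0: "v0 \<in> carrier_vec (Suc n)" and v00: "v0 \<noteq> 0\<^sub>v (Suc n)" and Av0: "A *\<^sub>v v0 = e \<cdot>\<^sub>v v0"
    unfolding eigenvector_def using A by auto
  define c where "c = complex_of_real (1 / sqrt (Re (v0 \<bullet>c v0)))"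
  define v where "v = c \<cdot>\<^sub>v v0"
  have v: "v \<in> carrier_vec (Suc n)" unfolding v_def using v0 by simp
  have v1: "v \<bullet>c v = 1" unfolding v_def c_def by (rule normalize_unit[OF v0 v00])
  have Av: "A *\<^sub>v v = e \<cdot>\<^sub>v v"
    unfolding v_def using mult_mat_vec[OF A v0, of c] Av0 by (simp add: smult_smult_assoc mult.commute)
  have "e = cnj e"
  proof -
    have "e = (A *\<^sub>v v) \<bullet>c v" unfolding Av cinner_smult_left[OF v v] v1 by simp
    also have "\<dots> = v \<bullet>c (A *\<^sub>v v)" by (rule herm_swap[OF Suc.prems v v])
    also have "\<dots> = cnj e" unfolding Av cinner_smult_right[OF v v] v1 by simp
    finally show ?thesis .
  qed
  then have ereal: "e = complex_of_real (Re e)" by (simp add: complex_eq_iff)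
  from unit_complete[OF v v1] obtain ws where ws: "orthonormal (Suc n) ws" "length ws = Suc n" "ws ! 0 = v"
    by blast
  have wsc: "\<And>k. k < Suc n \<Longrightarrow> ws ! k \<in> carrier_vec (Suc n)" using ws unfolding orthonormal_def by auto
  define w where "w k = ws ! Suc k" for k
  have wc: "\<And>k. k < n \<Longrightarrow> w k \<in> carrier_vec (Suc n)" unfolding w_def using wsc by simp
  have Awc: "\<And>k. k < n \<Longrightarrow> A *\<^sub>v w k \<in> carrier_vec (Suc n)" using wc A by simp
  define B where "B = mat n n (\<lambda>(i,k). (A *\<^sub>v w k) \<bullet>c w i)"
  have Bcnj: "cnj (B $$ (l,i)) = B $$ (i,l)" if "i < n" "l < n" for i l
  proof -
    have "cnj (B $$ (l,i)) = cnj ((A *\<^sub>v w i) \<bullet>c w l)" unfolding B_def using that by simp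
    also have "\<dots> = w l \<bullet>c (A *\<^sub>v w i)" by (rule cinner_cnj[OF Awc wc]) (use that in auto)
    also have "\<dots> = (A *\<^sub>v w l) \<bullet>c w i" by (rule herm_swap[OF Suc.prems wc wc, symmetric]) (use that in auto)
    also have "\<dots> = B $$ (i,l)" unfolding B_def using that by simp
    finally show ?thesis .
  qed
  have hB: "herm n B" unfolding herm_def
  proof (intro conjI allI impI)
    show "B \<in> carrier_mat n n" unfolding B_def by simp
    fix i j assume "i < n" "j < n"
    then show "B $$ (i, j) = cnj (B $$ (j, i))" using Bcnj[of i j] by simp
  qed
  from Suc.IH[OF hB] obtain ys lam where ys: "orthonormal n ys" "length ys = n"
    and Bys: "\<And>k. k < n \<Longrightarrow> B *\<^sub>v ys ! k = complex_of_real (lam k) \<cdot>\<^sub>v ys ! k" by blast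
  have ysc: "\<And>k. k < n \<Longrightarrow> ys ! k \<in> carrier_vec n" using ys unfolding orthonormal_def by auto
  define cf where "cf y = (\<lambda>k. case k of 0 \<Rightarrow> 0 | Suc i \<Rightarrow> y $ i)" for y :: "complex vec"
  define E where "E y = lc (Suc n) ws (cf y)" for y
  have Ec: "E y \<in> carrier_vec (Suc n)" for y unfolding E_def by simp
  have Ev: "E y \<bullet>c v = 0" for y
    unfolding E_def ws(3)[symmetric] by (subst lc_inner_basis[OF ws(1)]) (auto simp: ws cf_def)
  have vE: "v \<bullet>c E y = 0" for y using cinner_cnj[OF Ec v, of y] Ev[of y] by simp
  have EE: "E y \<bullet>c E z = y \<bullet>c z" if "y \<in> carrier_vec n" "z \<in> carrier_vec n" for y z
  proof -
    have "E y \<bullet>c E z = (\<Sum>k<Suc n. cf y k * cnj (cf z k))"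
      unfolding E_def lc_inner[OF ws(1)] ws(2) ..
    also have "\<dots> = (\<Sum>i<n. y $ i * cnj (z $ i))"
      by (subst sum.lessThan_Suc_shift) (simp add: cf_def)
    also have "\<dots> = y \<bullet>c z" by (rule cinner_sum[symmetric]) (use that in auto)
    finally show ?thesis .
  qed
  have AE: "A *\<^sub>v E y = \<mu> \<cdot>\<^sub>v E y" if y: "y \<in> carrier_vec n" and By: "B *\<^sub>v y = \<mu> \<cdot>\<^sub>v y" for y \<mu>
  proof -
    have z: "A *\<^sub>v E y \<in> carrier_vec (Suc n)" using A Ec by simp
    have coef: "(A *\<^sub>v E y) \<bullet>c ws ! k = \<mu> * cf y k" if k: "k < Suc n" for k
    proof -
      have "(A *\<^sub>v E y) \<bullet>c ws ! k = E y \<bullet>c (A *\<^sub>v ws ! k)"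
        by (rule herm_swap[OF Suc.prems Ec wsc[OF k]])
      also have "\<dots> = \<mu> * cf y k"
      proof (cases k)
        case 0
        have "E y \<bullet>c (A *\<^sub>v ws ! k) = E y \<bullet>c (e \<cdot>\<^sub>v v)" using 0 ws(3) Av by simp
        also have "\<dots> = 0" unfolding cinner_smult_right[OF Ec v] Ev by simp
        finally show ?thesis using 0 by (simp add: cf_def)
      next
        case (Suc i)
        then have i: "i < n" using k by simp
        have eq: "A *\<^sub>v ws ! k = lc (Suc n) ws (\<lambda>l. (A *\<^sub>v w i) \<bullet>c ws ! l)"
          using completeness[OF ws(1,2) Awc[OF i]] Suc unfolding w_def by simp
        have "E y \<bullet>c (A *\<^sub>v ws ! k) = lc (Suc n) ws (cf y) \<bullet>c lc (Suc n) ws (\<lambda>l. (A *\<^sub>v w i) \<bullet>c ws ! l)"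
          unfolding E_def eq ..
        also have "\<dots> = (\<Sum>l<Suc n. cf y l * cnj ((A *\<^sub>v w i) \<bullet>c ws ! l))"
          unfolding lc_inner[OF ws(1)] ws(2) ..
        also have "\<dots> = (\<Sum>l<n. y $ l * cnj ((A *\<^sub>v w i) \<bullet>c w l))"
          by (subst sum.lessThan_Suc_shift) (simp add: cf_def w_def)
        also have "\<dots> = (\<Sum>l<n. B $$ (i,l) * y $ l)"
        proof (intro sum.cong refl)
          fix l assume l: "l \<in> {..<n}"
          have "cnj ((A *\<^sub>v w i) \<bullet>c w l) = cnj (B $$ (l,i))" unfolding B_def using i l by simp
          also have "\<dots> = B $$ (i,l)" using Bcnj[of i l] i l by simp
          finally show "y $ l * cnj ((A *\<^sub>v w i) \<bullet>c w l) = B $$ (i,l) * y $ l" by simp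
        qed
        also have "\<dots> = (B *\<^sub>v y) $ i"
          by (rule mult_mat_vec_sum[symmetric]) (use i y in \<open>auto simp: B_def\<close>)
        also have "\<dots> = \<mu> * y $ i" unfolding By using i y by simp
        finally show ?thesis using Suc by (simp add: cf_def)
      qed
      finally show ?thesis .
    qed
    have "A *\<^sub>v E y = lc (Suc n) ws (\<lambda>k. (A *\<^sub>v E y) \<bullet>c ws ! k)"
      by (rule completeness[OF ws(1,2) z])
    also have "\<dots> = lc (Suc n) ws (\<lambda>k. \<mu> * cf y k)"
      by (rule lc_cong) (use coef ws(2) in auto)
    also have "\<dots> = \<mu> \<cdot>\<^sub>v E y" unfolding lc_smult E_def ..
    finally show ?thesis .
  qed
  define us where "us = v # map E ys"
  define lam2 where "lam2 k = (case k of 0 \<Rightarrow> Re e | Suc i \<Rightarrow> lam i)" for k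
  have len: "length us = Suc n" unfolding us_def using ys by simp
  have on: "orthonormal (Suc n) us" unfolding orthonormal_def
  proof (intro conjI allI impI)
    show "set us \<subseteq> carrier_vec (Suc n)" unfolding us_def using v Ec by auto
    fix i j assume i: "i < length us" and j: "j < length us"
    show "us ! i \<bullet>c us ! j = (if i = j then 1 else 0)"
    proof (cases i)
      case 0
      then show ?thesis
        by (cases j) (use j len ys(2) in \<open>auto simp: us_def v1 vE\<close>)
    next
      case (Suc i')
      have i': "i' < n" using i Suc len by simp
      show ?thesis
      proof (cases j)
        case 0
        then show ?thesis using Suc i' ys(2) by (simp add: us_def Ev)
      next
        case (Suc j')
        have j': "j' < n" using j Suc len by simp
        have "us ! i \<bullet>c us ! j = ys ! i' \<bullet>c ys ! j'"
          using \<open>i = Suc i'\<close> Suc i' j' ys(2) EE[OF ysc ysc] by (simp add: us_def)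
        also have "\<dots> = (if i' = j' then 1 else 0)" using ys(1) i' j' ys(2) unfolding orthonormal_def by simp
        finally show ?thesis using \<open>i = Suc i'\<close> Suc by simp
      qed
    qed
  qed
  have eig: "A *\<^sub>v us ! k = complex_of_real (lam2 k) \<cdot>\<^sub>v us ! k" if k: "k < Suc n" for k
  proof (cases k)
    case 0
    then show ?thesis unfolding us_def lam2_def using Av ereal by simp
  next
    case (Suc i)
    then have i: "i < n" using k by simp
    have "A *\<^sub>v E (ys ! i) = complex_of_real (lam i) \<cdot>\<^sub>v E (ys ! i)"
      by (rule AE[OF ysc[OF i] Bys[OF i]])
    then show ?thesis unfolding us_def lam2_def using Suc i ys(2) by simp
  qed
  show ?case using on len eig by blast
qed

definition Fm :: "nat \<Rightarrow> complex vec list \<Rightarrow> (nat \<Rightarrow> real) \<Rightarrow> complex mat" where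
  "Fm d ws f = mat d d (\<lambda>(r,c). \<Sum>k<d. complex_of_real (f k) * ws ! k $ r * cnj (ws ! k $ c))"

lemma Fm_carrier[simp]: "Fm d ws f \<in> carrier_mat d d" by (simp add: Fm_def)
lemma Fm_dim[simp]: "dim_row (Fm d ws f) = d" "dim_col (Fm d ws f) = d" by (simp_all add: Fm_def)
lemma Fm_index: "r < d \<Longrightarrow> c < d \<Longrightarrow> Fm d ws f $$ (r,c) = (\<Sum>k<d. complex_of_real (f k) * ws ! k $ r * cnj (ws ! k $ c))"
  by (simp add: Fm_def)

lemma unit_cinner: "w \<in> carrier_vec d \<Longrightarrow> c < d \<Longrightarrow> unit_vec d c \<bullet>c w = cnj (w $ c)"
  by (subst scalar_prod_left_unit[of _ d]) auto

lemma one_expand: assumes on: "orthonormal d ws" "length ws = d" and j: "j < d" and c: "c < d"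
  shows "1\<^sub>m d $$ (j,c) = (\<Sum>k<d. ws ! k $ j * cnj (ws ! k $ c))"
proof -
  have wsc: "\<And>k. k < d \<Longrightarrow> ws ! k \<in> carrier_vec d" using on unfolding orthonormal_def by auto
  have "1\<^sub>m d $$ (j,c) = unit_vec d c $ j" using j c by simp
  also have "\<dots> = lc d ws (\<lambda>k. unit_vec d c \<bullet>c ws ! k) $ j"
    using completeness[OF on, of "unit_vec d c"] c by simp
  also have "\<dots> = (\<Sum>k<d. (unit_vec d c \<bullet>c ws ! k) * ws ! k $ j)" using j on(2) by (simp add: lc_index)
  also have "\<dots> = (\<Sum>k<d. ws ! k $ j * cnj (ws ! k $ c))"
    by (intro sum.cong refl) (simp add: unit_cinner[OF wsc c])
  finally show ?thesis .
qed

lemma matrix_expand: assumes on: "orthonormal d ws" "length ws = d" and A: "A \<in> carrier_mat d d"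
  and r: "r < d" and c: "c < d"
  shows "A $$ (r,c) = (\<Sum>k<d. (A *\<^sub>v ws ! k) $ r * cnj (ws ! k $ c))"
proof -
  have wsc: "\<And>k. k < d \<Longrightarrow> ws ! k \<in> carrier_vec d" using on unfolding orthonormal_def by auto
  have "(\<Sum>j<d. A $$ (r,j) * 1\<^sub>m d $$ (j,c)) = (\<Sum>j<d. if j = c then A $$ (r,j) else 0)"
    by (intro sum.cong refl) (use c in auto)
  then have "A $$ (r,c) = (\<Sum>j<d. A $$ (r,j) * 1\<^sub>m d $$ (j,c))" using c by simp
  also have "\<dots> = (\<Sum>j<d. \<Sum>k<d. A $$ (r,j) * (ws ! k $ j * cnj (ws ! k $ c)))"
    by (intro sum.cong refl) (simp add: one_expand[OF on _ c] sum_distrib_left)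
  also have "\<dots> = (\<Sum>k<d. \<Sum>j<d. A $$ (r,j) * (ws ! k $ j * cnj (ws ! k $ c)))"
    by (rule sum.swap)
  also have "\<dots> = (\<Sum>k<d. (A *\<^sub>v ws ! k) $ r * cnj (ws ! k $ c))"
    by (intro sum.cong refl) (simp add: mult_mat_vec_sum[OF A wsc r] sum_distrib_left sum_distrib_right mult_ac)
  finally show ?thesis .
qed

lemma Fm_eig: assumes on: "orthonormal d ws" "length ws = d" and A: "A \<in> carrier_mat d d"
  and eig: "\<And>k. k < d \<Longrightarrow> A *\<^sub>v ws ! k = complex_of_real (f k) \<cdot>\<^sub>v ws ! k"
  shows "A = Fm d ws f"
proof (rule eq_matI)
  have wsc: "\<And>k. k < d \<Longrightarrow> ws ! k \<in> carrier_vec d" using on unfolding orthonormal_def by auto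
  fix r c assume r: "r < dim_row (Fm d ws f)" and c: "c < dim_col (Fm d ws f)"
  then have r: "r < d" and c: "c < d" by auto
  show "A $$ (r,c) = Fm d ws f $$ (r,c)"
    unfolding matrix_expand[OF on A r c] Fm_index[OF r c]
  proof (intro sum.cong refl)
    fix k assume "k \<in> {..<d}"
    then show "(A *\<^sub>v ws ! k) $ r * cnj (ws ! k $ c) = complex_of_real (f k) * ws ! k $ r * cnj (ws ! k $ c)"
      using wsc[of k] r by (simp add: eig)
  qed
qed (use A in auto)

lemma Fm_mult_vec: assumes on: "orthonormal d ws" "length ws = d" and x: "x \<in> carrier_vec d"
  shows "Fm d ws f *\<^sub>v x = lc d ws (\<lambda>k. complex_of_real (f k) * (x \<bullet>c ws ! k))"
proof (rule eq_vecI)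
  have wsc: "\<And>k. k < d \<Longrightarrow> ws ! k \<in> carrier_vec d" using on unfolding orthonormal_def by auto
  fix r assume "r < dim_vec (lc d ws (\<lambda>k. complex_of_real (f k) * (x \<bullet>c ws ! k)))"
  then have r: "r < d" by simp
  have "(Fm d ws f *\<^sub>v x) $ r = (\<Sum>c<d. (\<Sum>k<d. complex_of_real (f k) * ws ! k $ r * cnj (ws ! k $ c)) * x $ c)"
    using mult_mat_vec_sum[OF Fm_carrier x r] by (simp add: Fm_index r)
  also have "\<dots> = (\<Sum>c<d. \<Sum>k<d. complex_of_real (f k) * ws ! k $ r * (x $ c * cnj (ws ! k $ c)))"
    by (intro sum.cong refl) (simp add: sum_distrib_left sum_distrib_right mult_ac)
  also have "\<dots> = (\<Sum>k<d. \<Sum>c<d. complex_of_real (f k) * ws ! k $ r * (x $ c * cnj (ws ! k $ c)))"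
    by (rule sum.swap)
  also have "\<dots> = (\<Sum>k<d. complex_of_real (f k) * (x \<bullet>c ws ! k) * ws ! k $ r)"
    by (intro sum.cong refl) (simp add: cinner_sum[OF x wsc] sum_distrib_left mult_ac)
  also have "\<dots> = lc d ws (\<lambda>k. complex_of_real (f k) * (x \<bullet>c ws ! k)) $ r"
    using r on(2) by (simp add: lc_index)
  finally show "(Fm d ws f *\<^sub>v x) $ r = lc d ws (\<lambda>k. complex_of_real (f k) * (x \<bullet>c ws ! k)) $ r" .
qed simp

lemma Fm_vec: assumes on: "orthonormal d ws" "length ws = d" and j: "j < d"
  shows "Fm d ws f *\<^sub>v ws ! j = complex_of_real (f j) \<cdot>\<^sub>v ws ! j"
proof -
  have wsc: "\<And>k. k < d \<Longrightarrow> ws ! k \<in> carrier_vec d" using on unfolding orthonormal_def by auto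
  have o: "\<And>k. k < d \<Longrightarrow> ws ! j \<bullet>c ws ! k = (if j = k then 1 else 0)" using on j unfolding orthonormal_def by auto
  have "Fm d ws f *\<^sub>v ws ! j = lc d ws (\<lambda>k. complex_of_real (f k) * (ws ! j \<bullet>c ws ! k))"
    by (rule Fm_mult_vec[OF on wsc[OF j]])
  also have "\<dots> = complex_of_real (f j) \<cdot>\<^sub>v ws ! j"
  proof (rule eq_vecI)
    fix r assume "r < dim_vec (complex_of_real (f j) \<cdot>\<^sub>v ws ! j)"
    then have r: "r < d" using wsc[OF j] by simp
    have "lc d ws (\<lambda>k. complex_of_real (f k) * (ws ! j \<bullet>c ws ! k)) $ r
       = (\<Sum>k<d. (if k = j then complex_of_real (f j) * ws ! j $ r else 0))"
      unfolding lc_index[OF r] on(2)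
    proof (intro sum.cong refl)
      fix k assume "k \<in> {..<d}"
      then show "complex_of_real (f k) * (ws ! j \<bullet>c ws ! k) * ws ! k $ r = (if k = j then complex_of_real (f j) * ws ! j $ r else 0)"
        using o[of k] by auto
    qed
    also have "\<dots> = complex_of_real (f j) * ws ! j $ r" using j by simp
    finally show "lc d ws (\<lambda>k. complex_of_real (f k) * (ws ! j \<bullet>c ws ! k)) $ r = (complex_of_real (f j) \<cdot>\<^sub>v ws ! j) $ r"
      using r wsc[OF j] by simp
  qed (use wsc[OF j] in simp)
  finally show ?thesis .
qed

lemma Fm_mult: assumes on: "orthonormal d ws" "length ws = d"
  shows "Fm d ws f * Fm d ws g = Fm d ws (\<lambda>k. f k * g k)"
proof (rule Fm_eig[OF on])
  have wsc: "\<And>k. k < d \<Longrightarrow> ws ! k \<in> carrier_vec d" using on unfolding orthonormal_def by auto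
  show "Fm d ws f * Fm d ws g \<in> carrier_mat d d" by (rule mult_carrier_mat[OF Fm_carrier Fm_carrier])
  fix k assume k: "k < d"
  have "(Fm d ws f * Fm d ws g) *\<^sub>v ws ! k = Fm d ws f *\<^sub>v (Fm d ws g *\<^sub>v ws ! k)"
    using wsc[OF k] by (simp add: assoc_mult_mat_vec[of _ d d _ d])
  also have "\<dots> = Fm d ws f *\<^sub>v (complex_of_real (g k) \<cdot>\<^sub>v ws ! k)" by (simp add: Fm_vec[OF on k])
  also have "\<dots> = complex_of_real (g k) \<cdot>\<^sub>v (Fm d ws f *\<^sub>v ws ! k)" by (rule mult_mat_vec[OF Fm_carrier wsc[OF k]])
  also have "\<dots> = complex_of_real (f k * g k) \<cdot>\<^sub>v ws ! k"
    by (simp add: Fm_vec[OF on k] smult_smult_assoc mult.commute)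
  finally show "(Fm d ws f * Fm d ws g) *\<^sub>v ws ! k = complex_of_real (f k * g k) \<cdot>\<^sub>v ws ! k" .
qed

lemma Fm_one: assumes on: "orthonormal d ws" "length ws = d"
  shows "Fm d ws (\<lambda>k. 1) = 1\<^sub>m d"
proof (rule eq_matI)
  fix i j assume "i < dim_row (1\<^sub>m d)" "j < dim_col (1\<^sub>m d)"
  then have i: "i < d" and j: "j < d" by auto
  show "Fm d ws (\<lambda>k. 1) $$ (i,j) = 1\<^sub>m d $$ (i,j)"
    unfolding Fm_index[OF i j] one_expand[OF on i j] by simp
qed auto

lemma Fm_lin1: "complex_of_real c \<cdot>\<^sub>m Fm d ws f - Fm d ws g = Fm d ws (\<lambda>k. c * f k - g k)"
  by (rule eq_matI) (auto simp: Fm_index sum_distrib_left sum_subtractf[symmetric] algebra_simps)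

lemma Fm_lin2: "Fm d ws f - complex_of_real c \<cdot>\<^sub>m Fm d ws g = Fm d ws (\<lambda>k. f k - c * g k)"
  by (rule eq_matI) (auto simp: Fm_index sum_distrib_left sum_subtractf[symmetric] algebra_simps)

lemma Fm_quad: assumes on: "orthonormal d ws" "length ws = d" and x: "x \<in> carrier_vec d"
  shows "(Fm d ws f *\<^sub>v x) \<bullet>c x = complex_of_real (\<Sum>k<d. f k * (cmod (x \<bullet>c ws ! k))\<^sup>2)"
proof -
  have "(Fm d ws f *\<^sub>v x) \<bullet>c x = lc d ws (\<lambda>k. complex_of_real (f k) * (x \<bullet>c ws ! k)) \<bullet>c lc d ws (\<lambda>k. x \<bullet>c ws ! k)"
    using Fm_mult_vec[OF on x] completeness[OF on x] by simp
  also have "\<dots> = (\<Sum>k<d. complex_of_real (f k) * (x \<bullet>c ws ! k) * cnj (x \<bullet>c ws ! k))"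
    unfolding lc_inner[OF on(1)] on(2) ..
  also have "\<dots> = complex_of_real (\<Sum>k<d. f k * (cmod (x \<bullet>c ws ! k))\<^sup>2)"
    unfolding of_real_sum by (intro sum.cong refl) (simp only: of_real_mult complex_norm_square mult.assoc)
  finally show ?thesis .
qed

lemma Fm_diag: assumes on: "orthonormal d ws" "length ws = d"
  shows "Fm d ws f = mat_of_cols d ws * mat_diag d (\<lambda>i. complex_of_real (f i)) * mat_adjoint (mat_of_cols d ws)"
proof (rule eq_matI)
  let ?U = "mat_of_cols d ws"
  have U: "?U \<in> carrier_mat d d" using on by auto
  fix r c assume "r < dim_row (?U * mat_diag d (\<lambda>i. complex_of_real (f i)) * mat_adjoint ?U)"
    "c < dim_col (?U * mat_diag d (\<lambda>i. complex_of_real (f i)) * mat_adjoint ?U)"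
  then have r: "r < d" and c: "c < d" using U by auto
  have "(?U * mat_diag d (\<lambda>i. complex_of_real (f i)) * mat_adjoint ?U) $$ (r,c)
     = (\<Sum>k<d. (ws ! k $ r * complex_of_real (f k)) * cnj (ws ! k $ c))"
    unfolding mat_diag_mult_right[OF U] using r c U on(2)
    by (simp add: scalar_prod_def lessThan_atLeast0 row_def col_def mat_of_cols_index)
  then show "Fm d ws f $$ (r,c) = (?U * mat_diag d (\<lambda>i. complex_of_real (f i)) * mat_adjoint ?U) $$ (r,c)"
    by (simp add: Fm_index r c mult_ac)
qed (use on in auto)

lemma cancel_left: "A * B = 1\<^sub>m n \<Longrightarrow> (A :: complex mat) \<in> carrier_mat n n \<Longrightarrow> B \<in> carrier_mat n n \<Longrightarrow> X \<in> carrier_mat n k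
  \<Longrightarrow> A * (B * X) = X"
  by (metis assoc_mult_mat left_mult_one_mat)

lemma log_unique:
  assumes U: "unitary_mat n U" and V: "unitary_mat n V"
    and l: "\<forall>i<n. l i > 0" and l': "\<forall>i<n. l' i > 0"
    and eq: "U * mat_diag n (\<lambda>i. complex_of_real (l i)) * mat_adjoint U = V * mat_diag n (\<lambda>i. complex_of_real (l' i)) * mat_adjoint V"
  shows "U * mat_diag n (\<lambda>i. complex_of_real (ln (l i))) * mat_adjoint U = V * mat_diag n (\<lambda>i. complex_of_real (ln (l' i))) * mat_adjoint V"
proof -
  have Uc[simp]: "U \<in> carrier_mat n n" and UU: "mat_adjoint U * U = 1\<^sub>m n" using U unfolding unitary_mat_def by auto
  have Vc[simp]: "V \<in> carrier_mat n n" and VV: "mat_adjoint V * V = 1\<^sub>m n" using V unfolding unitary_mat_def by auto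
  have Uac[simp]: "mat_adjoint U \<in> carrier_mat n n" and Vac[simp]: "mat_adjoint V \<in> carrier_mat n n" by auto
  have UU': "U * mat_adjoint U = 1\<^sub>m n" by (rule mat_mult_left_right_inverse[OF Uac Uc UU])
  have VV': "V * mat_adjoint V = 1\<^sub>m n" by (rule mat_mult_left_right_inverse[OF Vac Vc VV])
  define D where "D = mat_diag n (\<lambda>i. complex_of_real (l i))"
  define D' where "D' = mat_diag n (\<lambda>i. complex_of_real (l' i))"
  define L where "L = mat_diag n (\<lambda>i. complex_of_real (ln (l i)))"
  define L' where "L' = mat_diag n (\<lambda>i. complex_of_real (ln (l' i)))"
  have Dc[simp]: "D \<in> carrier_mat n n" "D' \<in> carrier_mat n n" "L \<in> carrier_mat n n" "L' \<in> carrier_mat n n"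
    unfolding D_def D'_def L_def L'_def by auto
  define W where "W = mat_adjoint V * U"
  have Wc[simp]: "W \<in> carrier_mat n n" unfolding W_def by (rule mult_carrier_mat[OF Vac Uc])
  have c1: "\<And>X. X \<in> carrier_mat n n \<Longrightarrow> mat_adjoint U * (U * X) = X" by (rule cancel_left[OF UU]) auto
  have c2: "\<And>X. X \<in> carrier_mat n n \<Longrightarrow> mat_adjoint V * (V * X) = X" by (rule cancel_left[OF VV]) auto
  have c3: "\<And>X. X \<in> carrier_mat n n \<Longrightarrow> U * (mat_adjoint U * X) = X" by (rule cancel_left[OF UU']) auto
  have c4: "\<And>X. X \<in> carrier_mat n n \<Longrightarrow> V * (mat_adjoint V * X) = X" by (rule cancel_left[OF VV']) auto
  note as = assoc_mult_mat[of _ n n _ n _ n]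
  have eq': "U * D * mat_adjoint U = V * D' * mat_adjoint V" using eq unfolding D_def D'_def .
  have "W * D = mat_adjoint V * (U * D * mat_adjoint U) * U"
    unfolding W_def by (simp add: as mult_carrier_mat[of _ n n _ n] right_mult_one_mat[of _ n n] left_mult_one_mat[of _ n n] c1 UU)
  also have "\<dots> = mat_adjoint V * (V * D' * mat_adjoint V) * U" unfolding eq' ..
  also have "\<dots> = D' * W" unfolding W_def by (simp add: as mult_carrier_mat[of _ n n _ n] right_mult_one_mat[of _ n n] left_mult_one_mat[of _ n n] c2)
  finally have WD: "W * D = D' * W" .
  have WL: "W * L = L' * W"
  proof (rule eq_matI)
    fix i j assume "i < dim_row (L' * W)" "j < dim_col (L' * W)"
    then have i: "i < n" and j: "j < n" using carrier_matD[OF Wc] by (auto simp: L'_def mat_diag_def)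
    have e: "W $$ (i,j) * complex_of_real (l j) = complex_of_real (l' i) * W $$ (i,j)"
      using arg_cong[OF WD, of "\<lambda>M. M $$ (i,j)"] i j
      unfolding D_def D'_def mat_diag_mult_right[OF Wc] mat_diag_mult_left[OF Wc] by simp
    have "W $$ (i,j) * complex_of_real (ln (l j)) = complex_of_real (ln (l' i)) * W $$ (i,j)"
    proof (cases "W $$ (i,j) = 0")
      case False
      then have "complex_of_real (l j) = complex_of_real (l' i)" using e by (simp add: mult.commute)
      then have "l j = l' i" by simp
      then show ?thesis by (simp add: mult.commute)
    qed simp
    then show "(W * L) $$ (i,j) = (L' * W) $$ (i,j)"
      unfolding L_def L'_def mat_diag_mult_right[OF Wc] mat_diag_mult_left[OF Wc] using i j by simp
  qed (use carrier_matD[OF Wc] in \<open>auto simp: L_def L'_def mat_diag_def\<close>)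
  have "U * L * mat_adjoint U = V * (W * L) * mat_adjoint U" unfolding W_def by (simp add: as mult_carrier_mat[of _ n n _ n] right_mult_one_mat[of _ n n] left_mult_one_mat[of _ n n] c4)
  also have "\<dots> = V * (L' * W) * mat_adjoint U" unfolding WL ..
  also have "\<dots> = V * L' * mat_adjoint V" unfolding W_def by (simp add: as mult_carrier_mat[of _ n n _ n] right_mult_one_mat[of _ n n] left_mult_one_mat[of _ n n] UU')
  finally show ?thesis unfolding L_def L'_def .
qed

lemma mat_log_Fm: assumes on: "orthonormal d ws" "length ws = d" and f: "\<forall>k<d. f k > 0"
  shows "mat_log (Fm d ws f) = Fm d ws (\<lambda>k. ln (f k))"
proof -
  let ?U = "mat_of_cols d ws"
  have U: "unitary_mat d ?U" by (rule orthonormal_unitary(1)[OF on])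
  show ?thesis unfolding mat_log_def Fm_dim
  proof (rule the_equality)
    show "\<exists>U lam. unitary_mat d U \<and> (\<forall>i<d. 0 < lam i) \<and>
      Fm d ws f = U * mat_diag d (\<lambda>i. complex_of_real (lam i)) * mat_adjoint U \<and>
      Fm d ws (\<lambda>k. ln (f k)) = U * mat_diag d (\<lambda>i. complex_of_real (ln (lam i))) * mat_adjoint U"
      using U f Fm_diag[OF on, of f] Fm_diag[OF on, of "\<lambda>k. ln (f k)"] by blast
  next
    fix L assume "\<exists>U lam. unitary_mat d U \<and> (\<forall>i<d. 0 < lam i) \<and>
      Fm d ws f = U * mat_diag d (\<lambda>i. complex_of_real (lam i)) * mat_adjoint U \<and>
      L = U * mat_diag d (\<lambda>i. complex_of_real (ln (lam i))) * mat_adjoint U"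
    then obtain V lam where V: "unitary_mat d V" and lam: "\<forall>i<d. 0 < lam i"
      and e1: "Fm d ws f = V * mat_diag d (\<lambda>i. complex_of_real (lam i)) * mat_adjoint V"
      and e2: "L = V * mat_diag d (\<lambda>i. complex_of_real (ln (lam i))) * mat_adjoint V" by blast
    have "?U * mat_diag d (\<lambda>i. complex_of_real (f i)) * mat_adjoint ?U = V * mat_diag d (\<lambda>i. complex_of_real (lam i)) * mat_adjoint V"
      using e1 Fm_diag[OF on, of f] by simp
    from log_unique[OF U V f lam this]
    show "L = Fm d ws (\<lambda>k. ln (f k))" unfolding e2 Fm_diag[OF on, of "\<lambda>k. ln (f k)"] by simp
  qed
qed

lemma gram_sum_dim[simp]: "dim_row (gram_sum d v S) = d" "dim_col (gram_sum d v S) = d"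
  "gram_sum d v S \<in> carrier_mat d d"
  by (auto simp: gram_sum_def)

lemma trace_gram: assumes F: "F \<in> carrier_mat d d" and v: "\<And>i. i \<in> S \<Longrightarrow> v i \<in> carrier_vec d"
  shows "mtrace (gram_sum d v S * F) = (\<Sum>i\<in>S. (F *\<^sub>v v i) \<bullet>c v i)"
proof -
  have "mtrace (gram_sum d v S * F) = (\<Sum>r<d. \<Sum>c<d. (\<Sum>i\<in>S. v i $ r * cnj (v i $ c)) * F $$ (c,r))"
    unfolding mtrace_def using F by (simp add: scalar_prod_def lessThan_atLeast0 row_def col_def gram_sum_def)
  also have "\<dots> = (\<Sum>r<d. \<Sum>c<d. \<Sum>i\<in>S. F $$ (c,r) * v i $ r * cnj (v i $ c))"
    by (simp add: sum_distrib_left sum_distrib_right mult_ac)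
  also have "\<dots> = (\<Sum>i\<in>S. \<Sum>c<d. \<Sum>r<d. F $$ (c,r) * v i $ r * cnj (v i $ c))"
    by (rule sum3_swap)
  also have "\<dots> = (\<Sum>i\<in>S. (F *\<^sub>v v i) \<bullet>c v i)"
  proof (rule sum.cong[OF refl])
    fix i assume i: "i \<in> S"
    have Fv: "F *\<^sub>v v i \<in> carrier_vec d" using F v[OF i] by simp
    show "(\<Sum>c<d. \<Sum>r<d. F $$ (c,r) * v i $ r * cnj (v i $ c)) = (F *\<^sub>v v i) \<bullet>c v i"
      unfolding cinner_sum[OF Fv v[OF i]]
      by (intro sum.cong refl) (simp add: mult_mat_vec_sum[OF F v[OF i]] sum_distrib_right)
  qed
  finally show ?thesis .
qed

lemma minv_eq: assumes M: "(M :: complex mat) \<in> carrier_mat n n" and N: "N \<in> carrier_mat n n"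
  and MN: "M * N = 1\<^sub>m n" and NM: "N * M = 1\<^sub>m n"
  shows "minv M = N"
proof (cases "mat_inverse M")
  case None
  from mat_inverse(1)[OF M None, of undefined] have "M \<notin> Units (ring_mat TYPE(complex) n undefined)" .
  moreover have "M \<in> Units (ring_mat TYPE(complex) n undefined)"
    unfolding Units_def ring_mat_def using M N MN NM by auto
  ultimately show ?thesis by blast
next
  case (Some B)
  from mat_inverse(2)[OF M Some] have MB: "M * B = 1\<^sub>m n" and B: "B \<in> carrier_mat n n" by auto
  have "B = (N * M) * B" using B NM by simp
  also have "\<dots> = N * (M * B)" using N M B by simp
  also have "\<dots> = N" using MB N by simp
  finally show ?thesis unfolding minv_def Some by simp
qed

lemma Fm_cong: "(\<And>k. k < d \<Longrightarrow> f k = g k) \<Longrightarrow> Fm d ws f = Fm d ws g"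
  unfolding Fm_def by (intro eq_matI) auto

lemma jensen_ln: fixes w \<mu> :: "'a \<Rightarrow> real" assumes K: "finite K" and w: "\<And>k. k \<in> K \<Longrightarrow> w k \<ge> 0" and w1: "sum w K = 1"
  and mu: "\<And>k. k \<in> K \<Longrightarrow> \<mu> k > 0"
  shows "(\<Sum>k\<in>K. w k * ln (\<mu> k)) \<le> ln (\<Sum>k\<in>K. w k * \<mu> k)"
proof -
  define S where "S = (\<Sum>k\<in>K. w k * \<mu> k)"
  have nn: "\<And>k. k \<in> K \<Longrightarrow> w k * \<mu> k \<ge> 0"
  proof -
    fix k assume k: "k \<in> K"
    show "w k * \<mu> k \<ge> 0" using w[OF k] mu[OF k] by simp
  qed
  have S: "S > 0"
  proof (rule ccontr)
    assume "\<not> S > 0"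
    then have "S = 0" using sum_nonneg[of K "\<lambda>k. w k * \<mu> k"] nn unfolding S_def by force
    then have "\<forall>k\<in>K. w k * \<mu> k = 0" using sum_nonneg_eq_0_iff[OF K, of "\<lambda>k. w k * \<mu> k"] nn unfolding S_def by blast
    then have "\<forall>k\<in>K. w k = 0" using mu by (metis less_irrefl mult_eq_0_iff)
    then have "sum w K = 0" by simp
    then show False using w1 by simp
  qed
  have "(\<Sum>k\<in>K. w k * ln (\<mu> k)) \<le> (\<Sum>k\<in>K. w k * (ln S + \<mu> k / S - 1))"
  proof (rule sum_mono)
    fix k assume k: "k \<in> K"
    have "ln (\<mu> k / S) \<le> \<mu> k / S - 1" by (rule ln_le_minus_one) (use S mu[OF k] in simp)
    then have "ln (\<mu> k) \<le> ln S + \<mu> k / S - 1" using S mu[OF k] by (simp add: ln_div)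
    then show "w k * ln (\<mu> k) \<le> w k * (ln S + \<mu> k / S - 1)" by (rule mult_left_mono) (use w[OF k] in simp)
  qed
  also have "\<dots> = ln S * sum w K + (\<Sum>k\<in>K. w k * \<mu> k) / S - sum w K"
    by (simp add: algebra_simps sum.distrib sum_subtractf sum_distrib_left sum_distrib_right sum_divide_distrib)
  also have "\<dots> = ln S" using w1 S unfolding S_def by simp
  finally show ?thesis unfolding S_def .
qed

lemma gram_sum_diff: assumes "finite T" "S \<subseteq> T"
  shows "gram_sum d v (T - S) = gram_sum d v T - gram_sum d v S"
  by (rule eq_matI) (auto simp: gram_sum_def sum.subset_diff[OF assms(2,1)])

lemma herm_gram: "herm d (gram_sum d v S)"
  unfolding herm_def by (auto simp: gram_sum_def cnj_sum mult.commute)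

theorem lemma3p3:
  fixes d m j :: nat and \<alpha> :: real and v :: "nat \<Rightarrow> complex vec" and sel :: "nat \<Rightarrow> nat"
  assumes "d > 0"
    and "even m"
    and "\<forall>i<m. v i \<in> carrier_vec d"
    and "gram_sum d v {..<m} = 1\<^sub>m d"
    and "\<forall>i<m. v i \<bullet>c v i = complex_of_real \<alpha>"
    and "\<alpha> \<le> 1 / (221 * real d)"
    and "alg1_run d m \<alpha> v sel"
    and "j < m div 2"
    and "\<forall>j'\<le>j. u_seq d \<alpha> j' - lambda_max (A_seq d v sel j') \<ge> 1/3"
    and "\<forall>j'\<le>j. cond_num (complex_of_real (u_seq d \<alpha> j') \<cdot>\<^sub>m 1\<^sub>m d - A_seq d v sel j') \<le> 3/2"
  shows "(\<Sum>i\<in>B_seq m sel j.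
            ln (1 - Re ((minv (complex_of_real (u_seq d \<alpha> (Suc j)) \<cdot>\<^sub>m 1\<^sub>m d - A_seq d v sel j) *\<^sub>v v i) \<bullet>c v i)))
         \<ge> (1 / \<alpha>) * Re (mtrace ((1\<^sub>m d - A_seq d v sel j) *
              mat_log (1\<^sub>m d - complex_of_real \<alpha> \<cdot>\<^sub>m minv (complex_of_real (u_seq d \<alpha> (Suc j)) \<cdot>\<^sub>m 1\<^sub>m d - A_seq d v sel j))))"
proof -
  note dpos = assms(1)
  define A where "A = A_seq d v sel j"
  define uh where "uh = u_seq d \<alpha> (Suc j)"
  define B where "B = B_seq m sel j"
  have vc: "\<And>i. i < m \<Longrightarrow> v i \<in> carrier_vec d" using assms(3) by blast
  have vn: "\<And>i. i < m \<Longrightarrow> v i \<bullet>c v i = complex_of_real \<alpha>" using assms(5) by blast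
  have m0: "0 < m" using assms(8) by simp
  have Ssub: "sel ` {..<j} \<subseteq> {..<m}"
  proof
    fix x assume "x \<in> sel ` {..<j}"
    then obtain j' where j': "j' < j" "x = sel j'" by auto
    have "j' < m div 2" using j' assms(8) by simp
    then have "sel j' \<in> B_seq m sel j'" using assms(7) unfolding alg1_run_def by blast
    then show "x \<in> {..<m}" using j' unfolding B_seq_def by auto
  qed
  have Bsub: "B \<subseteq> {..<m}" unfolding B_def B_seq_def by auto
  have finB: "finite B" using Bsub finite_subset by blast
  have gramB: "gram_sum d v B = 1\<^sub>m d - A"
    unfolding B_def B_seq_def A_def A_seq_def gram_sum_diff[OF finite_lessThan Ssub] assms(4) ..
  have Ac: "A \<in> carrier_mat d d" unfolding A_def A_seq_def by simp
  have a0: "\<alpha> \<ge> 0"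
  proof -
    have "0 \<le> v 0 \<bullet>c v 0" by (rule conjugate_square_ge_0_vec)
    then show ?thesis using vn[OF m0] by (simp add: less_eq_complex_def)
  qed
  have apos: "\<alpha> > 0"
  proof (rule ccontr)
    assume "\<not> \<alpha> > 0"
    then have "\<alpha> = 0" using a0 by simp
    then have z: "\<And>i. i < m \<Longrightarrow> v i = 0\<^sub>v d" using vn vc conjugate_square_eq_0_vec by fastforce
    have "gram_sum d v {..<m} $$ (0,0) = 0" using dpos z by (simp add: gram_sum_def)
    then show False using assms(4) dpos by simp
  qed
  have a221: "\<alpha> \<le> 1/221"
  proof -
    have "1 / (221 * real d) \<le> 1 / 221" using dpos by (simp add: field_simps)
    then show ?thesis using assms(6) by linarith
  qed
  from spectral[OF herm_gram[of d v "sel ` {..<j}", folded A_seq_def, folded A_def]]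
  obtain ws a where on: "orthonormal d ws" "length ws = d"
    and eig: "\<And>k. k < d \<Longrightarrow> A *\<^sub>v ws ! k = complex_of_real (a k) \<cdot>\<^sub>v ws ! k" by blast
  have wsc: "\<And>k. k < d \<Longrightarrow> ws ! k \<in> carrier_vec d" using on unfolding orthonormal_def by auto
  have ws1: "\<And>k. k < d \<Longrightarrow> ws ! k \<bullet>c ws ! k = 1" using on unfolding orthonormal_def by auto
  have AF: "A = Fm d ws a" by (rule Fm_eig[OF on Ac eig])
  have fin: "finite {r. eigenvalue A (complex_of_real r)}"
  proof -
    have "{r. eigenvalue A (complex_of_real r)} = complex_of_real -` spectrum A"
      unfolding spectrum_def by auto
    then show ?thesis using finite_vimageI[OF card_finite_spectrum(1)[OF Ac] inj_of_real] by simp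
  qed
  have ale: "a k \<le> lambda_max A" if k: "k < d" for k
  proof -
    have "ws ! k \<noteq> 0\<^sub>v d" using ws1[OF k] by auto
    then have "eigenvalue A (complex_of_real (a k))"
      unfolding eigenvalue_def eigenvector_def using wsc[OF k] eig[OF k] Ac by auto
    then show ?thesis unfolding lambda_max_def using fin by (simp add: Max_ge)
  qed
  have hyp: "u_seq d \<alpha> j - lambda_max A \<ge> 1/3" using assms(9) unfolding A_def by blast
  have uh: "uh = u_seq d \<alpha> j + \<alpha> / real d" unfolding uh_def u_seq_def by (simp add: algebra_simps add_divide_distrib)
  have ad: "\<alpha> / real d \<ge> 0" using a0 by simp
  have g3: "uh - a k \<ge> 1/3" if k: "k < d" for k using ale[OF k] hyp uh ad by linarith
  have gpos: "uh - a k > 0" if k: "k < d" for k using g3[OF k] by linarith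
  define mu where "mu k = 1 - \<alpha> * (1 / (uh - a k))" for k
  have mupos: "mu k > 0" if k: "k < d" for k
  proof -
    have "1 / (uh - a k) \<le> 3" using g3[OF k] gpos[OF k] by (simp add: field_simps)
    then have "\<alpha> * (1 / (uh - a k)) \<le> \<alpha> * 3" using a0 by (intro mult_left_mono)
    then show ?thesis unfolding mu_def using a221 by linarith
  qed
  have one: "1\<^sub>m d = Fm d ws (\<lambda>k. 1)" using Fm_one[OF on] by simp
  define M where "M = complex_of_real uh \<cdot>\<^sub>m 1\<^sub>m d - A"
  have MF: "M = Fm d ws (\<lambda>k. uh * 1 - a k)" unfolding M_def one AF Fm_lin1 ..
  define N where "N = Fm d ws (\<lambda>k. 1 / (uh - a k))"
  have MN: "M * N = 1\<^sub>m d"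
    unfolding MF N_def Fm_mult[OF on] one
  proof (intro Fm_cong)
    fix k assume k: "k < d"
    show "(uh * 1 - a k) * (1 / (uh - a k)) = 1" using gpos[OF k] by simp
  qed
  have NM: "N * M = 1\<^sub>m d"
    unfolding MF N_def Fm_mult[OF on] one
  proof (intro Fm_cong)
    fix k assume k: "k < d"
    show "1 / (uh - a k) * (uh * 1 - a k) = 1" using gpos[OF k] by simp
  qed
  have minvM: "minv M = N" by (rule minv_eq[OF _ _ MN NM]) (auto simp: MF N_def)
  have XF: "1\<^sub>m d - complex_of_real \<alpha> \<cdot>\<^sub>m N = Fm d ws mu"
    unfolding N_def mu_def by (subst one) (rule Fm_lin2)
  have logX: "mat_log (1\<^sub>m d - complex_of_real \<alpha> \<cdot>\<^sub>m N) = Fm d ws (\<lambda>k. ln (mu k))"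
    unfolding XF by (rule mat_log_Fm[OF on]) (use mupos in auto)
  define q where "q i k = (cmod (v i \<bullet>c ws ! k))\<^sup>2" for i k
  have qnn: "q i k \<ge> 0" for i k unfolding q_def by simp
  have qsum: "(\<Sum>k<d. q i k) = \<alpha>" if i: "i < m" for i
  proof -
    have "complex_of_real (\<Sum>k<d. 1 * q i k) = (Fm d ws (\<lambda>k. 1) *\<^sub>v v i) \<bullet>c v i"
      unfolding q_def by (rule Fm_quad[OF on vc[OF i], symmetric])
    also have "\<dots> = complex_of_real \<alpha>" unfolding one[symmetric] using vc[OF i] vn[OF i] by simp
    finally have "complex_of_real (\<Sum>k<d. 1 * q i k) = complex_of_real \<alpha>" .
    then show ?thesis by (simp only: of_real_eq_iff mult_1)
  qed
  have lhs: "Re ((minv M *\<^sub>v v i) \<bullet>c v i) = (\<Sum>k<d. (1 / (uh - a k)) * q i k)" if i: "i < m" for i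
    unfolding minvM N_def q_def Fm_quad[OF on vc[OF i]] by simp
  have rhs: "Re (mtrace ((1\<^sub>m d - A) * mat_log (1\<^sub>m d - complex_of_real \<alpha> \<cdot>\<^sub>m minv M)))
      = (\<Sum>i\<in>B. \<Sum>k<d. ln (mu k) * q i k)"
  proof -
    have "mtrace ((1\<^sub>m d - A) * mat_log (1\<^sub>m d - complex_of_real \<alpha> \<cdot>\<^sub>m minv M))
        = mtrace (gram_sum d v B * Fm d ws (\<lambda>k. ln (mu k)))"
      unfolding minvM logX gramB ..
    also have "\<dots> = (\<Sum>i\<in>B. (Fm d ws (\<lambda>k. ln (mu k)) *\<^sub>v v i) \<bullet>c v i)"
      by (rule trace_gram) (use Bsub vc in auto)
    also have "\<dots> = (\<Sum>i\<in>B. complex_of_real (\<Sum>k<d. ln (mu k) * q i k))"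
      by (intro sum.cong refl) (use Bsub in \<open>auto simp: q_def Fm_quad[OF on vc]\<close>)
    finally show ?thesis by (simp add: of_real_sum[symmetric])
  qed
  have each: "(1 / \<alpha>) * (\<Sum>k<d. ln (mu k) * q i k) \<le> ln (1 - (\<Sum>k<d. (1 / (uh - a k)) * q i k))"
    if i: "i < m" for i
  proof -
    have w1: "(\<Sum>k<d. q i k / \<alpha>) = 1" using qsum[OF i] apos by (simp add: sum_divide_distrib[symmetric])
    have "(\<Sum>k<d. (q i k / \<alpha>) * ln (mu k)) \<le> ln (\<Sum>k<d. (q i k / \<alpha>) * mu k)"
      by (rule jensen_ln) (use w1 qnn apos mupos in auto)
    also have "(\<Sum>k<d. (q i k / \<alpha>) * mu k) = (\<Sum>k<d. q i k / \<alpha>) - (\<Sum>k<d. (1 / (uh - a k)) * q i k)"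
      unfolding mu_def using apos by (simp add: sum_subtractf[symmetric] algebra_simps)
    also have "\<dots> = 1 - (\<Sum>k<d. (1 / (uh - a k)) * q i k)" using w1 by simp
    also have "(\<Sum>k<d. (q i k / \<alpha>) * ln (mu k)) = (1 / \<alpha>) * (\<Sum>k<d. ln (mu k) * q i k)"
      by (simp add: sum_distrib_left mult_ac)
    finally show ?thesis .
  qed
  have "(1 / \<alpha>) * Re (mtrace ((1\<^sub>m d - A) * mat_log (1\<^sub>m d - complex_of_real \<alpha> \<cdot>\<^sub>m minv M)))
      = (\<Sum>i\<in>B. (1 / \<alpha>) * (\<Sum>k<d. ln (mu k) * q i k))"
    unfolding rhs by (simp add: sum_distrib_left)
  also have "\<dots> \<le> (\<Sum>i\<in>B. ln (1 - Re ((minv M *\<^sub>v v i) \<bullet>c v i)))"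
  proof (rule sum_mono)
    fix i assume "i \<in> B"
    then have i: "i < m" using Bsub by auto
    show "(1 / \<alpha>) * (\<Sum>k<d. ln (mu k) * q i k) \<le> ln (1 - Re ((minv M *\<^sub>v v i) \<bullet>c v i))"
      unfolding lhs[OF i] by (rule each[OF i])
  qed
  finally show ?thesis unfolding M_def A_def uh_def B_def .
qed

end
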